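(* Let $n\geq 1$ and $R>0$, and set $$C_1(R,n)=\frac{\omega_n}{4e^{2nR}}\left(\frac{e^{2R}-1}{e^{2(R+1)}-1}\right)^n,\qquad C_2(R,n)=\left(\frac{e^{4R}-1}{2}\right)^n\omega_n .$$ If $\mathcal{C}\subset\mathbb{R}^n$ is a bounded open convex set with its Hilbert distance $d_{\mathcal{C}}$ and Hilbert measure $\mu_{\mathcal{C}}$, then for every ball $B_R$ of radius $R$ in $(\mathcal{C},d_{\mathcal{C}})$, $$C_1(R,n)\leq\mu_{\mathcal{C}}(B_R)\leq C_2(R,n).$$
   Context: $d_{\mathcal{C}}(p,q)=\frac12\ln\Big(\frac{\|q-a\|_e}{\|p-a\|_e}\cdot\frac{\|p-b\|_e}{\|q-b\|_e}\Big)$, where the line through distinct $p,q$ meets $\partial\mathcal{C}$ in $a,b$ with $a,p,q,b$ in this order. Finsler norm $\|u\|_{\mathcal{C}}=\frac12\|u\|_e\big(\frac1{\|p-p^+\|_e}+\frac1{\|p-p^-\|_e}\big)$ for $u\in T_p\mathcal{C}=\mathbb{R}^n$, $p^\pm$ the intersections of the line $p+\mathbb{R}u$ with $\partial\mathcal{C}$. Hilbert measure $\mu_{\mathcal{C}}(A)=\int_A\frac{\omega_n}{\mathrm{vol}_e(TB_{\mathcal{C}}(p))}d\mathrm{vol}_e(p)$ where $TB_{\mathcal{C}}(p)=\{u:\|u\|_{\mathcal{C}}<1\}$, $\mathrm{vol}_e$ Lebesgue measure, $\omega_n$ the volume of the Euclidean unit ball of $\mathbb{R}^n$. $B_R=B_R(x)=\{y\in\mathcal{C}:d_{\mathcal{C}}(x,y)<R\}$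 for some $x\in\mathcal{C}$. *)

theory Defs
  imports "HOL-Analysis.Analysis"
begin

text \<open>Boundary point hit by the ray from p in direction u (for a bounded open convex C, p in C, u nonzero).\<close>
definition ray_exit :: "'a::euclidean_space set \<Rightarrow> 'a \<Rightarrow> 'a \<Rightarrow> 'a" where
  "ray_exit C p u = p + (Sup {t::real. 0 \<le> t \<and> p + t *\<^sub>R u \<in> C}) *\<^sub>R u"

text \<open>Hilbert distance: a = ray_exit C p (p - q), b = ray_exit C q (q - p), so a,p,q,b in this order.\<close>
definition hilbert_dist :: "'a::euclidean_space set \<Rightarrow> 'a \<Rightarrow> 'a \<Rightarrow> real" where
  "hilbert_dist C p q =
     (if p = q then 0 else
       (let a = ray_exit C p (p - q); b = ray_exit C q (q - p) in
         (1/2) * ln ((norm (q - a) / norm (p - a)) * (norm (p - b) / norm (q - b)))))"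

definition finsler_norm :: "'a::euclidean_space set \<Rightarrow> 'a \<Rightarrow> 'a \<Rightarrow> real" where
  "finsler_norm C p u =
     (1/2) * norm u * (1 / norm (p - ray_exit C p u) + 1 / norm (p - ray_exit C p (- u)))"

definition tangent_ball :: "'a::euclidean_space set \<Rightarrow> 'a \<Rightarrow> 'a set" where
  "tangent_ball C p = {u. finsler_norm C p u < 1}"

definition hilbert_measure :: "'a::euclidean_space set \<Rightarrow> 'a set \<Rightarrow> ennreal" where
  "hilbert_measure C A =
     (\<integral>\<^sup>+ p. indicator A p *
        ennreal (measure lebesgue (ball (0::'a) 1) / measure lebesgue (tangent_ball C p)) \<partial>lebesgue)"

definition hilbert_ball :: "'a::euclidean_space set \<Rightarrow> 'a \<Rightarrow> real \<Rightarrow> 'a set" where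
  "hilbert_ball C x R = {y \<in> C. hilbert_dist C x y < R}"

end

theory Submission
  imports Defs
begin

lemma uniq_le:
  fixes a b :: real
  assumes "a \<ge> 0" "b \<ge> 0" "\<forall>s\<ge>0. s*a < 1 \<longrightarrow> s*b < 1"
  shows "b \<le> a"
proof (rule ccontr)
  assume "\<not> b \<le> a"
  then have "a < b" by simp
  then have "(1/b)*a < 1" "(1/b)*b = 1" using assms by (auto simp: field_simps)
  then show False using assms(3)[rule_format, of "1/b"] assms by auto
qed

lemma affine_img:
  fixes S :: "'a::euclidean_space set"
  assumes S: "S \<in> lmeasurable" "convex S" "bounded S" and c: "c > 0"
  shows "(\<lambda>u. c *\<^sub>R u + x) ` S \<in> lmeasurable"
    "measure lebesgue ((\<lambda>u. c *\<^sub>R u + x) ` S) = c ^ DIM('a) * measure lebesgue S"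
    "emeasure lebesgue ((\<lambda>u. c *\<^sub>R u + x) ` S) = ennreal (c ^ DIM('a) * measure lebesgue S)"
proof -
  have eq: "(\<lambda>u. c *\<^sub>R u + x) ` S = (\<lambda>y. x + y) ` ((\<lambda>u. c *\<^sub>R u) ` S)" by (auto simp: image_image add.commute)
  have eq2: "(\<lambda>u. c *\<^sub>R u + x) ` S = (\<lambda>u. x + c *\<^sub>R u) ` S" by (auto simp: add.commute)
  have "convex ((\<lambda>u. c *\<^sub>R u + x) ` S)" unfolding eq2 using convex_affinity[OF S(2)] .
  moreover have "bounded ((\<lambda>u. c *\<^sub>R u + x) ` S)" unfolding eq
    using bounded_translation bounded_scaling S(3) by blast
  ultimately show "(\<lambda>u. c *\<^sub>R u + x) ` S \<in> lmeasurable" using measurable_convex by blast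
  show "measure lebesgue ((\<lambda>u. c *\<^sub>R u + x) ` S) = c ^ DIM('a) * measure lebesgue S"
    using measure_lebesgue_affine[of c x S] c by simp
  have "emeasure lebesgue ((\<lambda>u. c *\<^sub>R u + x) ` S) = ennreal (c ^ DIM('a)) * emeasure lebesgue S"
    using emeasure_lebesgue_affine[of c x S] c by simp
  also have "\<dots> = ennreal (c ^ DIM('a) * measure lebesgue S)"
    using emeasure_eq_measure2[OF S(1)] c by (simp add: ennreal_mult)
  finally show "emeasure lebesgue ((\<lambda>u. c *\<^sub>R u + x) ` S) = ennreal (c ^ DIM('a) * measure lebesgue S)" .
qed

locale hconv =
  fixes C :: "'a::euclidean_space set"
  assumes bnd: "bounded C" and opn: "open C" and cvx: "convex C"
begin

definition TT :: "'a \<Rightarrow> 'a \<Rightarrow> real" where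
  "TT p u = Sup {t::real. 0 \<le> t \<and> p + t *\<^sub>R u \<in> C}"

definition gg :: "'a \<Rightarrow> 'a \<Rightarrow> real" where
  "gg p u = (if u = 0 then 0 else 1 / TT p u)"

definition FF :: "'a \<Rightarrow> 'a \<Rightarrow> real" where
  "FF p u = (gg p u + gg p (- u)) / 2"

lemma comb_in:
  assumes "y \<in> C" "z \<in> C" "0 \<le> a" "a \<le> 1"
  shows "(1 - a) *\<^sub>R y + a *\<^sub>R z \<in> C"
  using cvx assms unfolding convex_def by auto

lemma TT_char:
  assumes p: "p \<in> C" and u: "u \<noteq> 0"
  shows "0 < TT p u \<and> (\<forall>t\<ge>0. p + t *\<^sub>R u \<in> C \<longleftrightarrow> t < TT p u)"
proof -
  define I where "I = {t::real. 0 \<le> t \<and> p + t *\<^sub>R u \<in> C}"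
  obtain M where M: "\<forall>y\<in>C. norm y \<le> M" using bnd bounded_iff by blast
  have nu: "norm u > 0" using u by simp
  have bdd: "bdd_above I"
  proof (rule bdd_aboveI)
    fix t assume "t \<in> I"
    then have t: "0 \<le> t" "p + t *\<^sub>R u \<in> C" by (auto simp: I_def)
    have "t * norm u = norm (t *\<^sub>R u)" using t by simp
    also have "\<dots> \<le> norm (p + t *\<^sub>R u) + norm p" by (metis add_diff_cancel_left' norm_triangle_ineq4)
    also have "\<dots> \<le> M + norm p" using M t by auto
    finally show "t \<le> (M + norm p) / norm u" using nu by (simp add: field_simps)
  qed
  have ne: "I \<noteq> {}" using p by (auto simp: I_def intro!: exI[of _ 0])
  obtain r where r: "r > 0" "ball p r \<subseteq> C" using opn p open_contains_ball by blast
  have "r / (2 * norm u) \<in> I"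
  proof -
    have "dist p (p + (r / (2 * norm u)) *\<^sub>R u) < r" using nu r by (simp add: dist_norm)
    then show ?thesis using r nu unfolding I_def by auto
  qed
  then have pos: "0 < Sup I" using r nu by (smt (verit, ccfv_SIG) bdd cSup_upper divide_pos_pos)
  have "\<forall>t\<ge>0. p + t *\<^sub>R u \<in> C \<longleftrightarrow> t < Sup I"
  proof (intro allI impI iffI)
    fix t :: real assume t: "t \<ge> 0" "p + t *\<^sub>R u \<in> C"
    obtain e where e: "e > 0" "ball (p + t *\<^sub>R u) e \<subseteq> C" using opn t open_contains_ball by blast
    have "dist (p + t *\<^sub>R u) (p + (t + e / (2 * norm u)) *\<^sub>R u) < e"
      using nu e by (simp add: dist_norm algebra_simps)
    then have "t + e / (2 * norm u) \<in> I" using e t nu unfolding I_def by auto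
    then have "t + e / (2 * norm u) \<le> Sup I" using bdd cSup_upper by blast
    moreover have "e / (2 * norm u) > 0" using e nu by simp
    ultimately show "t < Sup I" by linarith
  next
    fix t :: real assume t: "t \<ge> 0" "t < Sup I"
    then obtain t' where t': "t' \<in> I" "t < t'" using less_cSup_iff[OF ne bdd] by blast
    then have t'0: "t' > 0" "p + t' *\<^sub>R u \<in> C" using t by (auto simp: I_def)
    have "(1 - t/t') *\<^sub>R p + (t/t') *\<^sub>R (p + t' *\<^sub>R u) \<in> C"
      using comb_in[OF p t'0(2), of "t/t'"] t t' t'0 by auto
    moreover have "(1 - t/t') *\<^sub>R p + (t/t') *\<^sub>R (p + t' *\<^sub>R u) = p + t *\<^sub>R u"
      using t'0 by (simp add: algebra_simps)
    ultimately show "p + t *\<^sub>R u \<in> C" by simp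
  qed
  then show ?thesis using pos unfolding TT_def I_def by simp
qed

lemma KEY:
  assumes p: "p \<in> C" and s: "s \<ge> 0"
  shows "p + s *\<^sub>R u \<in> C \<longleftrightarrow> s * gg p u < 1"
proof (cases "u = 0")
  case True then show ?thesis using p by (simp add: gg_def)
next
  case False
  then show ?thesis using TT_char[OF p False] s by (auto simp: gg_def field_simps)
qed

lemma gg_pos: "p \<in> C \<Longrightarrow> u \<noteq> 0 \<Longrightarrow> gg p u > 0"
  using TT_char by (simp add: gg_def)

lemma gg_nonneg: "p \<in> C \<Longrightarrow> gg p u \<ge> 0"
  using gg_pos[of p u] by (cases "u = 0") (auto simp: gg_def)

lemma uniq_eq:
  fixes a b :: real
  assumes "a \<ge> 0" "b \<ge> 0" "\<forall>s\<ge>0. s*a < 1 \<longleftrightarrow> s*b < 1"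
  shows "a = b"
  using uniq_le[of a b] uniq_le[of b a] assms by auto

lemma gg_homog:
  assumes p: "p \<in> C" and c: "c \<ge> 0"
  shows "gg p (c *\<^sub>R u) = c * gg p u"
proof (rule uniq_eq[OF gg_nonneg[OF p]])
  show "0 \<le> c * gg p u" using c gg_nonneg[OF p] by simp
  show "\<forall>s\<ge>0. (s * gg p (c *\<^sub>R u) < 1) = (s * (c * gg p u) < 1)"
  proof (intro allI impI)
    fix s :: real assume s: "s \<ge> 0"
    have "s * gg p (c *\<^sub>R u) < 1 \<longleftrightarrow> p + s *\<^sub>R (c *\<^sub>R u) \<in> C" using KEY[OF p s, of "c *\<^sub>R u"] by simp
    also have "\<dots> \<longleftrightarrow> p + (s * c) *\<^sub>R u \<in> C" by simp
    also have "\<dots> \<longleftrightarrow> (s*c) * gg p u < 1" using KEY[OF p] s c by simp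
    finally show "(s * gg p (c *\<^sub>R u) < 1) = (s * (c * gg p u) < 1)" by (simp add: mult.assoc)
  qed
qed

lemma gg_subadd:
  assumes p: "p \<in> C"
  shows "gg p (u + v) \<le> gg p u + gg p v"
proof (rule uniq_le)
  show "0 \<le> gg p u + gg p v" using gg_nonneg[OF p] by (simp add: add_nonneg_nonneg)
  show "0 \<le> gg p (u + v)" using gg_nonneg[OF p] by simp
  show "\<forall>s\<ge>0. s * (gg p u + gg p v) < 1 \<longrightarrow> s * gg p (u + v) < 1"
  proof (intro allI impI)
    fix s :: real assume s: "s \<ge> 0" "s * (gg p u + gg p v) < 1"
    define A where "A = s * gg p u"
    define B where "B = s * gg p v"
    have A0: "A \<ge> 0" "B \<ge> 0" using s gg_nonneg[OF p] by (auto simp: A_def B_def)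
    have AB: "A + B < 1" using s by (simp add: A_def B_def algebra_simps)
    define th where "th = A + (1 - A - B) / 2"
    have th: "A < th" "B < 1 - th" "0 < th" "th < 1" using A0 AB by (auto simp: th_def field_simps)
    have "p + (s/th) *\<^sub>R u \<in> C"
      using KEY[OF p, of "s/th" u] s th by (simp add: A_def field_simps)
    moreover have "p + (s/(1-th)) *\<^sub>R v \<in> C"
      using KEY[OF p, of "s/(1-th)" v] s th by (simp add: B_def field_simps)
    ultimately have "(1 - th) *\<^sub>R (p + (s/(1-th)) *\<^sub>R v) + th *\<^sub>R (p + (s/th) *\<^sub>R u) \<in> C"
      using comb_in th by auto
    moreover have "(1 - th) *\<^sub>R (p + (s/(1-th)) *\<^sub>R v) + th *\<^sub>R (p + (s/th) *\<^sub>R u) = p + s *\<^sub>R (u + v)"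
    proof -
      have e1: "(1 - th) * (s/(1-th)) = s" "th * (s/th) = s" using th by auto
      show ?thesis unfolding scaleR_add_right scaleR_scaleR e1
        by (simp add: algebra_simps)
    qed
    ultimately show "s * gg p (u + v) < 1" using KEY[OF p s(1)] by simp
  qed
qed

lemma ray_exit_eq:
  assumes p: "p \<in> C" and u: "u \<noteq> 0"
  shows "ray_exit C p u = p + (1 / gg p u) *\<^sub>R u"
  using u unfolding ray_exit_def gg_def TT_def by simp

lemma finsler_eq:
  assumes p: "p \<in> C"
  shows "finsler_norm C p u = FF p u"
proof (cases "u = 0")
  case True then show ?thesis by (simp add: finsler_norm_def FF_def gg_def)
next
  case False
  have g1: "gg p u > 0" "gg p (-u) > 0" using gg_pos[OF p] False by auto
  have n1: "norm (p - ray_exit C p u) = norm u / gg p u"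
    using ray_exit_eq[OF p False] g1 by simp
  have n2: "norm (p - ray_exit C p (-u)) = norm u / gg p (-u)"
    using ray_exit_eq[OF p, of "-u"] False g1 by simp
  show ?thesis unfolding finsler_norm_def n1 n2 FF_def using False g1 by (simp add: field_simps)
qed

lemma tb_eq: "p \<in> C \<Longrightarrow> tangent_ball C p = {u. FF p u < 1}"
  unfolding tangent_ball_def using finsler_eq by auto

lemma FF_nonneg: "p \<in> C \<Longrightarrow> FF p u \<ge> 0"
  using gg_nonneg[of p] by (simp add: FF_def add_nonneg_nonneg)

lemma FF_homog:
  assumes p: "p \<in> C" and c: "c \<ge> 0"
  shows "FF p (c *\<^sub>R u) = c * FF p u"
proof -
  have "gg p (- (c *\<^sub>R u)) = c * gg p (-u)" using gg_homog[OF p c, of "-u"] by simp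
  then show ?thesis using gg_homog[OF p c, of u] by (simp add: FF_def algebra_simps)
qed

lemma FF_convex_ineq:
  assumes p: "p \<in> C" and a: "0 \<le> a" "a \<le> 1"
  shows "FF p ((1 - a) *\<^sub>R u + a *\<^sub>R v) \<le> (1 - a) * FF p u + a * FF p v"
proof -
  have "FF p ((1 - a) *\<^sub>R u + a *\<^sub>R v) \<le> FF p ((1 - a) *\<^sub>R u) + FF p (a *\<^sub>R v)"
  proof -
    have eq: "- ((1 - a) *\<^sub>R u + a *\<^sub>R v) = - ((1 - a) *\<^sub>R u) + - (a *\<^sub>R v)" by simp
    show ?thesis
      using gg_subadd[OF p, of "(1 - a) *\<^sub>R u" "a *\<^sub>R v"]
        gg_subadd[OF p, of "- ((1 - a) *\<^sub>R u)" "- (a *\<^sub>R v)"]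
      unfolding FF_def eq by argo
  qed
  also have "\<dots> = (1 - a) * FF p u + a * FF p v" using FF_homog[OF p] a by simp
  finally show ?thesis .
qed

lemma tb_convex: assumes p: "p \<in> C" shows "convex (tangent_ball C p)"
  unfolding tb_eq[OF p] convex_alt
proof (intro ballI allI impI)
  fix x y :: 'a and u :: real
  assume xy0: "x \<in> {u. FF p u < 1}" "y \<in> {u. FF p u < 1}" and u0: "0 \<le> u \<and> u \<le> 1"
  have u: "0 \<le> u" "u \<le> 1" using u0 by auto
  have xy: "FF p x < 1" "FF p y < 1" using xy0 by auto
  have "FF p ((1 - u) *\<^sub>R x + u *\<^sub>R y) \<le> (1 - u) * FF p x + u * FF p y"
    using FF_convex_ineq[OF p u] .
  also have "\<dots> < 1"
  proof (cases "u = 0")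
    case True then show ?thesis using xy by simp
  next
    case False
    have "(1 - u) * FF p x \<le> (1 - u) * 1" using xy u by (intro mult_left_mono) auto
    moreover have "u * FF p y < u * 1" using xy u False by (intro mult_strict_left_mono) auto
    ultimately show ?thesis by simp
  qed
  finally show "(1 - u) *\<^sub>R x + u *\<^sub>R y \<in> {u. FF p u < 1}" by simp
qed

lemma gg_upper_ball:
  assumes p: "p \<in> C" and r: "r > 0" "ball p r \<subseteq> C"
  shows "gg p u \<le> norm u / r"
proof (rule uniq_le)
  show "0 \<le> norm u / r" using r by simp
  show "0 \<le> gg p u" using gg_nonneg[OF p] .
  show "\<forall>s\<ge>0. s * (norm u / r) < 1 \<longrightarrow> s * gg p u < 1"
  proof (intro allI impI)
    fix s :: real assume s: "s \<ge> 0" "s * (norm u / r) < 1"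
    have "dist p (p + s *\<^sub>R u) < r" using s r by (simp add: dist_norm field_simps)
    then have "p + s *\<^sub>R u \<in> C" using r by auto
    then show "s * gg p u < 1" using KEY[OF p s(1)] by simp
  qed
qed

lemma gg_lower_ball:
  assumes p: "p \<in> C" and D: "D > 0" "C \<subseteq> ball p D"
  shows "norm u / D \<le> gg p u"
proof (rule ccontr)
  assume "\<not> norm u / D \<le> gg p u"
  then have lt: "gg p u < norm u / D" by simp
  then have u: "u \<noteq> 0" using gg_nonneg[OF p, of u] by auto
  have "(D / norm u) * gg p u < 1" using lt u D by (simp add: field_simps)
  then have "p + (D / norm u) *\<^sub>R u \<in> C" using KEY[OF p, of "D / norm u" u] D by simp
  moreover have "dist p (p + (D / norm u) *\<^sub>R u) = D" using u D by (simp add: dist_norm)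
  ultimately show False using D by auto
qed

lemma tb_props:
  assumes p: "p \<in> C"
  shows "tangent_ball C p \<in> lmeasurable" "measure lebesgue (tangent_ball C p) > 0" "bounded (tangent_ball C p)"
proof -
  obtain D where D: "D > 0" "C \<subseteq> ball p D" using bnd bounded_subset_ballD by blast
  obtain r where r: "r > 0" "ball p r \<subseteq> C" using opn p open_contains_ball by blast
  have "tangent_ball C p \<subseteq> ball 0 (2 * D)"
  proof
    fix u assume "u \<in> tangent_ball C p"
    then have "FF p u < 1" using tb_eq[OF p] by auto
    moreover have "norm u / D \<le> gg p u" "0 \<le> gg p (-u)" using gg_lower_ball[OF p D] gg_nonneg[OF p] by auto
    ultimately have "norm u / D < 2" by (simp add: FF_def)
    then show "u \<in> ball 0 (2 * D)" using D by (simp add: field_simps)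
  qed
  then show bd: "bounded (tangent_ball C p)" using bounded_subset bounded_ball by blast
  show lm: "tangent_ball C p \<in> lmeasurable" using measurable_convex[OF tb_convex[OF p] bd] .
  have sub: "ball 0 r \<subseteq> tangent_ball C p"
  proof
    fix u :: 'a assume "u \<in> ball 0 r"
    then have nu: "norm u < r" by simp
    have "gg p u \<le> norm u / r" "gg p (-u) \<le> norm u / r" using gg_upper_ball[OF p r] by (metis norm_minus_cancel)+
    then have "FF p u \<le> norm u / r" unfolding FF_def by argo
    also have "\<dots> < 1" using nu r by simp
    finally show "u \<in> tangent_ball C p" using tb_eq[OF p] by auto
  qed
  have "measure lebesgue (ball (0::'a) r) \<le> measure lebesgue (tangent_ball C p)"
    using measure_mono_fmeasurable[OF sub _ lm] by simp
  moreover have "measure lebesgue (ball (0::'a) r) > 0" using r by (simp add: content_ball_pos)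
  ultimately show "measure lebesgue (tangent_ball C p) > 0" by linarith
qed

lemma gg_lt1: "x \<in> C \<Longrightarrow> x + w \<in> C \<Longrightarrow> gg x w < 1"
  using KEY[of x 1 w] by simp

lemma L1:
  assumes x: "x \<in> C" and p: "x + w \<in> C"
  shows "gg (x + w) u \<le> gg x u / (1 - gg x w)"
proof (rule uniq_le)
  have b: "gg x w < 1" "gg x w \<ge> 0" using gg_lt1[OF x p] gg_nonneg[OF x] by auto
  show "0 \<le> gg x u / (1 - gg x w)" using b gg_nonneg[OF x, of u] by simp
  show "0 \<le> gg (x + w) u" using gg_nonneg[OF p] .
  show "\<forall>s\<ge>0. s * (gg x u / (1 - gg x w)) < 1 \<longrightarrow> s * gg (x + w) u < 1"
  proof (intro allI impI)
    fix s :: real assume s: "s \<ge> 0" "s * (gg x u / (1 - gg x w)) < 1"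
    have lt: "s * gg x u < 1 - gg x w" using s b by (simp add: field_simps)
    have su: "s * gg x u \<ge> 0" using s gg_nonneg[OF x] by simp
    define a where "a = (s * gg x u + 1 - gg x w) / 2"
    have a: "0 < a" "a < 1" "s * gg x u < a" "gg x w < 1 - a"
      using lt su b by (auto simp: a_def field_simps)
    have "x + (1 / (1 - a)) *\<^sub>R w \<in> C"
      using KEY[OF x, of "1 / (1 - a)" w] a by (simp add: field_simps)
    moreover have "x + (s / a) *\<^sub>R u \<in> C"
      using KEY[OF x, of "s / a" u] a s by (simp add: field_simps)
    ultimately have "(1 - a) *\<^sub>R (x + (1 / (1 - a)) *\<^sub>R w) + a *\<^sub>R (x + (s / a) *\<^sub>R u) \<in> C"
      using comb_in a by auto
    moreover have "(1 - a) *\<^sub>R (x + (1 / (1 - a)) *\<^sub>R w) + a *\<^sub>R (x + (s / a) *\<^sub>R u) = (x + w) + s *\<^sub>R u"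
    proof -
      have e1: "(1 - a) * (1/(1-a)) = 1" "a * (s/a) = s" using a by auto
      show ?thesis unfolding scaleR_add_right scaleR_scaleR e1 by (simp add: algebra_simps)
    qed
    ultimately show "s * gg (x + w) u < 1" using KEY[OF p s(1)] by simp
  qed
qed

lemma L2:
  assumes x: "x \<in> C" and p: "x + w \<in> C"
  shows "gg x u \<le> (1 + gg x (-w)) * gg (x + w) u"
proof (rule uniq_le)
  define c where "c = gg x (-w)"
  have c: "c \<ge> 0" using gg_nonneg[OF x] by (simp add: c_def)
  show "0 \<le> (1 + gg x (-w)) * gg (x + w) u" using c gg_nonneg[OF p, of u] by (simp add: c_def)
  show "0 \<le> gg x u" using gg_nonneg[OF x] .
  show "\<forall>s\<ge>0. s * ((1 + gg x (-w)) * gg (x + w) u) < 1 \<longrightarrow> s * gg x u < 1"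
  proof (intro allI impI)
    fix s :: real assume s: "s \<ge> 0" "s * ((1 + gg x (-w)) * gg (x + w) u) < 1"
    have lt: "s * gg (x + w) u < 1 / (1 + c)" using s c by (simp add: c_def field_simps)
    have su: "s * gg (x + w) u \<ge> 0" using s gg_nonneg[OF p] by simp
    define a where "a = (s * gg (x + w) u + 1 / (1 + c)) / 2"
    have kpos: "1 / (1 + c) > 0" using c by simp
    have a: "0 < a" "a < 1 / (1 + c)" "s * gg (x + w) u < a"
      using lt su kpos unfolding a_def by argo+
    have a1: "a < 1" using a c by (smt (verit, ccfv_SIG) divide_le_eq_1)
    have ac: "a * c < 1 - a" using a c by (simp add: field_simps)
    have "x + (a / (1 - a)) *\<^sub>R (- w) \<in> C"
      using KEY[OF x, of "a / (1 - a)" "- w"] a a1 ac by (simp add: field_simps c_def)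
    moreover have "(x + w) + (s / a) *\<^sub>R u \<in> C"
      using KEY[OF p, of "s / a" u] a s by (simp add: field_simps)
    ultimately have "(1 - a) *\<^sub>R (x + (a / (1 - a)) *\<^sub>R (- w)) + a *\<^sub>R ((x + w) + (s / a) *\<^sub>R u) \<in> C"
      using comb_in a a1 by auto
    moreover have "(1 - a) *\<^sub>R (x + (a / (1 - a)) *\<^sub>R (- w)) + a *\<^sub>R ((x + w) + (s / a) *\<^sub>R u) = x + s *\<^sub>R u"
    proof -
      have e1: "(1 - a) * (a/(1-a)) = a" "a * (s/a) = s" using a a1 by auto
      show ?thesis unfolding scaleR_add_right scaleR_scaleR scaleR_minus_right e1 by (simp add: algebra_simps)
    qed
    ultimately show "s * gg x u < 1" using KEY[OF x s(1)] by simp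
  qed
qed

lemma L3:
  assumes x: "x \<in> C" and p: "x + w \<in> C"
  shows "gg (x + w) w = gg x w / (1 - gg x w)"
proof -
  have b: "gg x w < 1" "gg x w \<ge> 0" using gg_lt1[OF x p] gg_nonneg[OF x] by auto
  show ?thesis
  proof (rule uniq_eq[OF gg_nonneg[OF p]])
    show "0 \<le> gg x w / (1 - gg x w)" using b by simp
    show "\<forall>s\<ge>0. (s * gg (x + w) w < 1) = (s * (gg x w / (1 - gg x w)) < 1)"
    proof (intro allI impI)
      fix s :: real assume s: "s \<ge> 0"
      have "s * gg (x + w) w < 1 \<longleftrightarrow> (x + w) + s *\<^sub>R w \<in> C" using KEY[OF p s] by simp
      also have "\<dots> \<longleftrightarrow> x + (1 + s) *\<^sub>R w \<in> C" by (simp add: algebra_simps)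
      also have "\<dots> \<longleftrightarrow> (1 + s) * gg x w < 1" using KEY[OF x, of "1 + s" w] s by simp
      also have "\<dots> \<longleftrightarrow> s * (gg x w / (1 - gg x w)) < 1" using b by (simp add: field_simps)
      finally show "(s * gg (x + w) w < 1) = (s * (gg x w / (1 - gg x w)) < 1)" .
    qed
  qed
qed

lemma dist_formula:
  assumes x: "x \<in> C" and p: "x + w \<in> C" and w: "w \<noteq> 0"
  shows "hilbert_dist C x (x + w) = (1/2) * ln ((1 + gg x (-w)) / (1 - gg x w))"
proof -
  define A where "A = gg x (-w)"
  define b where "b = gg x w"
  define G where "G = gg (x + w) w"
  have A: "A > 0" using gg_pos[OF x] w by (simp add: A_def)
  have b: "b > 0" "b < 1" using gg_pos[OF x w] gg_lt1[OF x p] by (auto simp: b_def)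
  have G: "G = b / (1 - b)" using L3[OF x p] by (simp add: G_def b_def)
  have Gp: "G > 0" using G b by simp
  have ea: "ray_exit C x (x - (x + w)) = x + (1 / A) *\<^sub>R (- w)"
    using ray_exit_eq[OF x, of "-w"] w by (simp add: A_def)
  have eb: "ray_exit C (x + w) (x + w - x) = (x + w) + (1 / G) *\<^sub>R w"
    using ray_exit_eq[OF p w] by (simp add: G_def)
  have n1: "norm (x + w - ray_exit C x (x - (x + w))) = (1 + 1/A) * norm w"
  proof -
    have "x + w - ray_exit C x (x - (x + w)) = (1 + 1/A) *\<^sub>R w" unfolding ea by (simp add: algebra_simps)
    then show ?thesis using A by simp
  qed
  have n2: "norm (x - ray_exit C x (x - (x + w))) = (1/A) * norm w"
    unfolding ea using A by simp
  have n3: "norm (x - ray_exit C (x + w) (x + w - x)) = (1 + 1/G) * norm w"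
  proof -
    have "x - ray_exit C (x + w) (x + w - x) = - ((1 + 1/G) *\<^sub>R w)" unfolding eb by (simp add: algebra_simps)
    then show ?thesis using Gp by (simp del: scaleR_minus_left)
  qed
  have n4: "norm (x + w - ray_exit C (x + w) (x + w - x)) = (1/G) * norm w"
    unfolding eb using Gp by simp
  have nw: "norm w > 0" using w by simp
  have "(norm (x + w - ray_exit C x (x - (x + w))) / norm (x - ray_exit C x (x - (x + w)))) *
        (norm (x - ray_exit C (x + w) (x + w - x)) / norm (x + w - ray_exit C (x + w) (x + w - x)))
        = (1 + A) / (1 - b)"
    unfolding n1 n2 n3 n4 G using A b nw by (simp add: field_simps)
  then show ?thesis using w unfolding hilbert_dist_def Let_def by (simp add: A_def b_def)
qed

lemma ln_lt: "(y::real) > 0 \<Longrightarrow> ln y < z \<Longrightarrow> y < exp z"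
proof -
  assume y: "y > 0" and l: "ln y < z"
  have "exp (ln y) < exp z" using l by (rule exp_less_mono)
  then show "y < exp z" using y by simp
qed

lemma upper:
  assumes x: "x \<in> C" and R: "R > 0"
  shows "hilbert_measure C (hilbert_ball C x R)
           \<le> ennreal (((exp (4 * R) - 1) / 2) ^ DIM('a) * measure lebesgue (ball (0::'a) 1))"
proof -
  define E where "E = exp (2*R)"
  have E1: "E > 1" using R by (simp add: E_def)
  define om where "om = measure lebesgue (ball (0::'a) 1)"
  have om: "om > 0" by (simp add: om_def content_ball_pos)
  define V where "V = measure lebesgue (tangent_ball C x)"
  have V: "V > 0" using tb_props[OF x] by (simp add: V_def)
  define c where "c = (E - 1)/2"
  have c: "c > 0" using E1 by (simp add: c_def)
  define S where "S = (\<lambda>u. c *\<^sub>R u + x) ` tangent_ball C x"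
  have Sm: "S \<in> sets lebesgue" and Se: "emeasure lebesgue S = ennreal (c ^ DIM('a) * V)"
    using affine_img[OF tb_props(1)[OF x] tb_convex[OF x] tb_props(3)[OF x] c, of x]
    unfolding S_def V_def by auto
  define K where "K = om * E ^ DIM('a) / V"
  have key: "p \<in> S \<and> om / measure lebesgue (tangent_ball C p) \<le> K" if pB: "p \<in> hilbert_ball C x R" for p
  proof -
    have pC: "p \<in> C" and d: "hilbert_dist C x p < R" using pB by (auto simp: hilbert_ball_def)
    define w where "w = p - x"
    have pw: "p = x + w" by (simp add: w_def)
    have xw: "x + w \<in> C" using pC pw by simp
    define a where "a = gg x (-w)"
    define b where "b = gg x w"
    have ab: "a \<ge> 0" "b \<ge> 0" "b < 1"
      using gg_nonneg[OF x] gg_lt1[OF x xw] by (auto simp: a_def b_def)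
    have ineq: "1 + a < E * (1 - b)"
    proof (cases "w = 0")
      case True then show ?thesis using E1 by (simp add: a_def b_def gg_def)
    next
      case False
      have "(1/2) * ln ((1+a)/(1-b)) < R" using d dist_formula[OF x xw False] pw by (simp add: a_def b_def)
      then have "ln ((1+a)/(1-b)) < 2*R" by simp
      then have "(1+a)/(1-b) < E" unfolding E_def using ab by (intro ln_lt) auto
      then show ?thesis using ab by (simp add: field_simps)
    qed
    have inS: "p \<in> S"
    proof -
      have F: "FF x w = (a+b)/2" by (simp add: FF_def a_def b_def)
      have "b \<le> E * b" using mult_right_mono[of 1 E b] E1 ab by simp
      then have "a + b < E - 1" using ineq by (simp add: algebra_simps)
      then have Fc: "FF x w < c" unfolding F c_def by argo
      define v where "v = (1/c) *\<^sub>R w"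
      have "FF x v = (1/c) * FF x w" unfolding v_def using FF_homog[OF x] c by simp
      also have "\<dots> < 1" using Fc c by (simp add: field_simps)
      finally have "v \<in> tangent_ball C x" using tb_eq[OF x] by auto
      moreover have "p = c *\<^sub>R v + x" using c by (simp add: v_def pw)
      ultimately show ?thesis unfolding S_def by blast
    qed
    have Eb: "1 / E \<le> 1 - b" using ineq ab E1 by (simp add: field_simps)
    have tb: "(\<lambda>u. (1/E) *\<^sub>R u + 0) ` tangent_ball C x \<subseteq> tangent_ball C p"
    proof
      fix y assume "y \<in> (\<lambda>u. (1/E) *\<^sub>R u + 0) ` tangent_ball C x"
      then obtain u where u: "u \<in> tangent_ball C x" and y: "y = (1/E) *\<^sub>R u" by auto
      have Fu: "FF x u < 1" using u tb_eq[OF x] by auto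
      have l1: "gg p u * (1 - b) \<le> gg x u" "gg p (-u) * (1 - b) \<le> gg x (-u)"
        using L1[OF x xw, of u] L1[OF x xw, of "-u"] ab by (auto simp: pw b_def pos_le_divide_eq)
      have "FF p u * (1 - b) \<le> FF x u" using l1 unfolding FF_def by argo
      have "FF p y = (1/E) * FF p u" using FF_homog[OF pC] E1 y by simp
      also have "\<dots> \<le> (1 - b) * FF p u" using Eb FF_nonneg[OF pC] by (intro mult_right_mono) auto
      also have "\<dots> \<le> FF x u" using \<open>FF p u * (1 - b) \<le> FF x u\<close> by (simp add: mult.commute)
      finally show "y \<in> tangent_ball C p" using Fu tb_eq[OF pC] by auto
    qed
    have E1': "1/E > 0" using E1 by simp
    have "measure lebesgue ((\<lambda>u. (1/E) *\<^sub>R u + 0) ` tangent_ball C x) \<le> measure lebesgue (tangent_ball C p)"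
      using measure_mono_fmeasurable[OF tb _ tb_props(1)[OF pC]]
        affine_img(1)[OF tb_props(1)[OF x] tb_convex[OF x] tb_props(3)[OF x] E1', of 0] by auto
    then have mp: "(1/E) ^ DIM('a) * V \<le> measure lebesgue (tangent_ball C p)"
      using affine_img(2)[OF tb_props(1)[OF x] tb_convex[OF x] tb_props(3)[OF x] E1', of 0] by (simp add: V_def)
    have pos: "0 < (1/E) ^ DIM('a) * V" using V E1 by simp
    have "om / measure lebesgue (tangent_ball C p) \<le> om / ((1/E) ^ DIM('a) * V)"
      using divide_left_mono[OF mp] om pos tb_props(2)[OF pC] by simp
    also have "\<dots> = K"
    proof -
      have "om / ((1/E) ^ DIM('a) * V) = om / (V / E ^ DIM('a))" by (simp add: power_one_over)
      also have "\<dots> = om * E ^ DIM('a) / V" using E1 V by simp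
      finally show ?thesis by (simp add: K_def)
    qed
    finally show ?thesis using inS by simp
  qed
  have "hilbert_measure C (hilbert_ball C x R)
        \<le> (\<integral>\<^sup>+ p. ennreal K * indicator S p \<partial>lebesgue)"
    unfolding hilbert_measure_def om_def[symmetric]
  proof (rule nn_integral_mono)
    fix p
    show "indicator (hilbert_ball C x R) p * ennreal (om / measure lebesgue (tangent_ball C p))
          \<le> ennreal K * indicator S p"
    proof (cases "p \<in> hilbert_ball C x R")
      case True then show ?thesis using key[OF True] by (simp add: ennreal_leI)
    next
      case False then show ?thesis by simp
    qed
  qed
  also have "\<dots> = ennreal K * ennreal (c ^ DIM('a) * V)"
    using nn_integral_cmult_indicator[OF Sm] Se by simp
  also have "\<dots> = ennreal (om * (E * c) ^ DIM('a))"
  proof -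
    have K0: "K \<ge> 0" using om V E1 by (simp add: K_def)
    have "K * (c ^ DIM('a) * V) = om * E ^ DIM('a) * c ^ DIM('a) * (V / V)" by (simp add: K_def)
    also have "\<dots> = om * (E * c) ^ DIM('a)" using V by (simp add: power_mult_distrib)
    finally have "K * (c ^ DIM('a) * V) = om * (E * c) ^ DIM('a)" .
    then show ?thesis using K0 c V by (simp add: ennreal_mult[symmetric])
  qed
  also have "\<dots> \<le> ennreal (((exp (4 * R) - 1) / 2) ^ DIM('a) * om)"
  proof (rule ennreal_leI)
    have e4: "exp (4 * R) = E * E" unfolding E_def by (simp add: exp_add[symmetric])
    have "E * c \<le> (exp (4 * R) - 1) / 2" unfolding e4 c_def using E1 by (simp add: field_simps)
    then have "(E * c) ^ DIM('a) \<le> ((exp (4 * R) - 1) / 2) ^ DIM('a)"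
      using E1 c by (intro power_mono) auto
    then show "om * (E * c) ^ DIM('a) \<le> ((exp (4 * R) - 1) / 2) ^ DIM('a) * om"
      using om by (simp add: mult.commute)
  qed
  finally show ?thesis by (simp add: om_def)
qed

lemma lower:
  assumes x: "x \<in> C" and R: "R > 0"
  shows "ennreal (measure lebesgue (ball (0::'a) 1) / (4 * exp (2 * real DIM('a) * R))
            * ((exp (2 * R) - 1) / (exp (2 * (R + 1)) - 1)) ^ DIM('a))
           \<le> hilbert_measure C (hilbert_ball C x R)"
proof -
  define E where "E = exp (2*R)"
  have E1: "E > 1" using R by (simp add: E_def)
  define om where "om = measure lebesgue (ball (0::'a) 1)"
  have om: "om > 0" by (simp add: om_def content_ball_pos)
  define V where "V = measure lebesgue (tangent_ball C x)"
  have V: "V > 0" using tb_props[OF x] by (simp add: V_def)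
  define t where "t = (E - 1) / (E + 1)"
  have t: "0 < t" "t < 1" using E1 by (auto simp: t_def field_simps)
  have Et: "E * (1 - t) = 1 + t" using E1 by (simp add: t_def field_simps)
  define c where "c = t / 2"
  have c: "c > 0" using t by (simp add: c_def)
  define S where "S = (\<lambda>u. c *\<^sub>R u + x) ` tangent_ball C x"
  have Sm: "S \<in> sets lebesgue" and Se: "emeasure lebesgue S = ennreal (c ^ DIM('a) * V)"
    using affine_img[OF tb_props(1)[OF x] tb_convex[OF x] tb_props(3)[OF x] c, of x]
    unfolding S_def V_def by auto
  define K where "K = om / ((1 + t) ^ DIM('a) * V)"
  have key: "p \<in> hilbert_ball C x R \<and> K \<le> om / measure lebesgue (tangent_ball C p)" if pS: "p \<in> S" for p
  proof -
    obtain v where v: "v \<in> tangent_ball C x" and pv: "p = c *\<^sub>R v + x" using pS unfolding S_def by auto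
    define w where "w = c *\<^sub>R v"
    have pw: "p = x + w" by (simp add: w_def pv)
    define a where "a = gg x (-w)"
    define b where "b = gg x w"
    have ab0: "a \<ge> 0" "b \<ge> 0" using gg_nonneg[OF x] by (auto simp: a_def b_def)
    have "FF x w = c * FF x v" using FF_homog[OF x] c by (simp add: w_def)
    also have "\<dots> < c" using v tb_eq[OF x] c by auto
    finally have "(a + b) / 2 < c" by (simp add: FF_def a_def b_def)
    then have abt: "a + b < t" by (simp add: c_def)
    then have ab: "a < t" "b < t" using ab0 by auto
    have xw: "x + w \<in> C" using KEY[OF x, of 1 w] ab t by (simp add: b_def)
    have pC: "p \<in> C" using xw pw by simp
    have dR: "hilbert_dist C x p < R"
    proof (cases "w = 0")
      case True then show ?thesis using R pw by (simp add: hilbert_dist_def)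
    next
      case False
      have "1 + a < E * (1 - b)"
      proof -
        have "E * (1 - t) \<le> E * (1 - b)" using ab E1 by simp
        then show ?thesis using Et ab by linarith
      qed
      then have "(1 + a) / (1 - b) < E" using ab t by (simp add: field_simps)
      then have "ln ((1 + a) / (1 - b)) < ln E" using ab0 ab t E1 by (intro ln_less_cancel_iff[THEN iffD2]) auto
      then have "ln ((1 + a) / (1 - b)) < 2 * R" by (simp add: E_def)
      then show ?thesis using dist_formula[OF x xw False] pw by (simp add: a_def b_def)
    qed
    have t1: "1 + t > 0" using t by simp
    have tb: "tangent_ball C p \<subseteq> (\<lambda>u. (1 + t) *\<^sub>R u + 0) ` tangent_ball C x"
    proof
      fix u assume u: "u \<in> tangent_ball C p"
      have Fu: "FF p u < 1" using u tb_eq[OF pC] by auto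
      have l2: "gg x u \<le> (1 + a) * gg p u" "gg x (-u) \<le> (1 + a) * gg p (-u)"
        using L2[OF x xw, of u] L2[OF x xw, of "-u"] by (auto simp: pw a_def)
      have "FF x u \<le> (1 + a) * FF p u" using l2 unfolding FF_def by argo
      also have "\<dots> \<le> (1 + t) * FF p u" using ab FF_nonneg[OF pC] by (intro mult_right_mono) auto
      finally have F1: "FF x u \<le> (1 + t) * FF p u" .
      define u' where "u' = (1 / (1 + t)) *\<^sub>R u"
      have "FF x u' = (1 / (1 + t)) * FF x u" using FF_homog[OF x] t1 by (simp add: u'_def)
      also have "\<dots> \<le> FF p u" using F1 t1 by (simp add: field_simps)
      finally have "u' \<in> tangent_ball C x" using Fu tb_eq[OF x] by auto
      moreover have "u = (1 + t) *\<^sub>R u' + 0" using t1 by (simp add: u'_def)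
      ultimately show "u \<in> (\<lambda>u. (1 + t) *\<^sub>R u + 0) ` tangent_ball C x" by blast
    qed
    have "measure lebesgue (tangent_ball C p) \<le> measure lebesgue ((\<lambda>u. (1 + t) *\<^sub>R u + 0) ` tangent_ball C x)"
      using measure_mono_fmeasurable[OF tb _ affine_img(1)[OF tb_props(1)[OF x] tb_convex[OF x] tb_props(3)[OF x] t1, of 0]]
        tb_props(1)[OF pC] by auto
    then have mp: "measure lebesgue (tangent_ball C p) \<le> (1 + t) ^ DIM('a) * V"
      using affine_img(2)[OF tb_props(1)[OF x] tb_convex[OF x] tb_props(3)[OF x] t1, of 0] by (simp add: V_def)
    have "K \<le> om / measure lebesgue (tangent_ball C p)"
      unfolding K_def using divide_left_mono[OF mp] om tb_props(2)[OF pC] V t1 by simp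
    then show ?thesis using dR pC by (simp add: hilbert_ball_def)
  qed
  have K0: "K \<ge> 0" using om V t by (simp add: K_def)
  have "ennreal (om * (c / (1 + t)) ^ DIM('a)) = ennreal K * ennreal (c ^ DIM('a) * V)"
  proof -
    have "K * (c ^ DIM('a) * V) = om * c ^ DIM('a) / (1 + t) ^ DIM('a) * (V / V)" by (simp add: K_def)
    also have "\<dots> = om * (c / (1 + t)) ^ DIM('a)" using V by (simp add: power_divide)
    finally show ?thesis using K0 c V by (simp add: ennreal_mult[symmetric])
  qed
  also have "\<dots> = (\<integral>\<^sup>+ p. ennreal K * indicator S p \<partial>lebesgue)"
    using nn_integral_cmult_indicator[OF Sm] Se by simp
  also have "\<dots> \<le> hilbert_measure C (hilbert_ball C x R)"
    unfolding hilbert_measure_def om_def[symmetric]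
  proof (rule nn_integral_mono)
    fix p
    show "ennreal K * indicator S p \<le> indicator (hilbert_ball C x R) p * ennreal (om / measure lebesgue (tangent_ball C p))"
    proof (cases "p \<in> S")
      case True then show ?thesis using key[OF True] by (simp add: ennreal_leI)
    next
      case False then show ?thesis by simp
    qed
  qed
  finally have main: "ennreal (om * (c / (1 + t)) ^ DIM('a)) \<le> hilbert_measure C (hilbert_ball C x R)" .
  have ct: "c / (1 + t) = (E - 1) / (4 * E)"
  proof -
    have Ep: "E + 1 > 0" "E > 0" using E1 by auto
    have t1e: "1 + t = 2 * E / (E + 1)" using Ep unfolding t_def by (simp add: field_simps)
    have tE: "t * (E + 1) = E - 1" using Ep unfolding t_def by simp
    have "c / (1 + t) = t * (E + 1) / (4 * E)" unfolding c_def t1e using Ep by (simp add: field_simps)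
    then show ?thesis unfolding tE .
  qed
  have e2: "exp (2::real) \<ge> 5" using exp_lower_Taylor_quadratic[of 2] by simp
  have eR: "exp (2 * (R + 1)) = E * exp 2" by (simp add: E_def exp_add[symmetric] algebra_simps)
  have en: "exp (2 * real DIM('a) * R) = E ^ DIM('a)"
    using exp_of_nat_mult[of "DIM('a)" "2 * R"] by (simp add: E_def mult.assoc mult.left_commute)
  define X where "X = (E - 1) / (E * exp 2 - 1)"
  have Ee: "E * exp 2 - 1 \<ge> 4"
  proof -
    have "E * exp 2 \<ge> 1 * 5" using E1 e2 by (intro mult_mono) auto
    then show ?thesis by simp
  qed
  have X0: "X \<ge> 0" using E1 Ee by (simp add: X_def)
  have XE: "X / E \<le> (E - 1) / (4 * E)"
  proof -
    have "X \<le> (E - 1) / 4" unfolding X_def using E1 Ee by (intro divide_left_mono) auto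
    then show ?thesis using E1 by (simp add: field_simps)
  qed
  have "om / (4 * exp (2 * real DIM('a) * R)) * ((exp (2 * R) - 1) / (exp (2 * (R + 1)) - 1)) ^ DIM('a)
        = om / 4 * (X / E) ^ DIM('a)"
    unfolding en eR X_def E_def[symmetric] by (simp add: power_divide power_mult_distrib mult.commute)
  also have "\<dots> \<le> om * (X / E) ^ DIM('a)" using om X0 E1 by simp
  also have "\<dots> \<le> om * (c / (1 + t)) ^ DIM('a)"
    unfolding ct using XE X0 E1 om by (intro mult_left_mono power_mono) auto
  finally have "om / (4 * exp (2 * real DIM('a) * R)) * ((exp (2 * R) - 1) / (exp (2 * (R + 1)) - 1)) ^ DIM('a)
        \<le> om * (c / (1 + t)) ^ DIM('a)" .
  then have "ennreal (om / (4 * exp (2 * real DIM('a) * R)) * ((exp (2 * R) - 1) / (exp (2 * (R + 1)) - 1)) ^ DIM('a))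
        \<le> ennreal (om * (c / (1 + t)) ^ DIM('a))" by (rule ennreal_leI)
  then show ?thesis using main unfolding om_def by (rule order_trans)
qed

end

theorem mainTheorem10:
  fixes C :: "'a::euclidean_space set" and x :: 'a and R :: real
  assumes "bounded C" and "open C" and "convex C"
    and "x \<in> C" and "R > 0"
  shows "ennreal (measure lebesgue (ball (0::'a) 1) / (4 * exp (2 * real DIM('a) * R))
            * ((exp (2 * R) - 1) / (exp (2 * (R + 1)) - 1)) ^ DIM('a))
           \<le> hilbert_measure C (hilbert_ball C x R)
       \<and> hilbert_measure C (hilbert_ball C x R)
           \<le> ennreal (((exp (4 * R) - 1) / 2) ^ DIM('a) * measure lebesgue (ball (0::'a) 1))"
proof -
  interpret hconv C using assms by unfold_locales
  show ?thesis using lower[OF assms(4,5)] upper[OF assms(4,5)] by simp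
qed

end
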